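(* Let $f(x)=\frac1n\sum_{t=1}^n f_t(x)$ where each $f_t:\mathbb{R}^d\to\mathbb{R}$ is convex and continuously differentiable, and suppose there are positive semidefinite matrices $Q^1,\dots,Q^m$ such that for all $t\in[n]$, $j\in[m]$ and $x,y\in\mathbb{R}^d$, $\|\nabla^{(j)} f_t(x)-\nabla^{(j)} f_t(y)\|^2\le\|x-y\|^2_{Q^j}$. Then for all $j\in[m]$ and $x,y$, $\|\nabla^{(j)} f(x)-\nabla^{(j)} f(y)\|^2\le\|x-y\|^2_{Q^j}$; consequently, with $L^2=2\|\tilde Q\|$, $f$ satisfies for all $x,y$: $f(y)-f(x)\le\langle\nabla f(x),y-x\rangle+\frac L2\|y-x\|^2$ and $\|\nabla f(y)-\nabla f(x)\|^2\le 2L(f(y)-f(x)-\langle\nabla f(x),y-x\rangle)$.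
   Context: The coordinates $\{1,\dots,d\}$ are partitioned into $m$ consecutive blocks $\mathcal{S}^1,\dots,\mathcal{S}^m$; $\nabla^{(j)}$ denotes the block-$j$ part of a gradient. For a PSD matrix $Q$, $\|x\|_Q^2=x^\top Qx$. For a $d\times d$ matrix $Q$, $(Q)_{\ge j}$ is obtained by zeroing all rows and columns indexed by blocks $1,\dots,j-1$. $\tilde Q=\sum_{j=1}^m[(Q^j)_{\ge j}+(Q^j)_{\ge j+1}]$ and $L^2=2\|\tilde Q\|<\infty$ (operator norm). *)

theory Defs
  imports "HOL-Analysis.Analysis"
begin

text \<open>Coordinates are indexed by a finite linearly ordered type 'd (so vectors are real^'d,
  i.e. R^d with d = CARD('d)). Blocks are S 1, ..., S m.\<close>

definition block_partition :: "nat \<Rightarrow> (nat \<Rightarrow> ('d::{finite,linorder}) set) \<Rightarrow> bool" where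
  "block_partition m S \<longleftrightarrow>
     (\<Union>j\<in>{1..m}. S j) = UNIV \<and>
     (\<forall>j\<in>{1..m}. S j \<noteq> {}) \<and>
     (\<forall>j k a b. 1 \<le> j \<and> j < k \<and> k \<le> m \<and> a \<in> S j \<and> b \<in> S k \<longrightarrow> a < b)"

text \<open>Block-j part of a vector (other coordinates zeroed; its norm is the norm of the block).\<close>
definition block_part :: "(nat \<Rightarrow> ('d::finite) set) \<Rightarrow> nat \<Rightarrow> real^'d \<Rightarrow> real^'d" where
  "block_part S j v = (\<chi> i. if i \<in> S j then v $ i else 0)"

definition psd :: "real^'d^'d \<Rightarrow> bool" where
  "psd Q \<longleftrightarrow> transpose Q = Q \<and> (\<forall>x. 0 \<le> x \<bullet> (Q *v x))"

definition qnorm_sq :: "real^'d^'d \<Rightarrow> real^'d \<Rightarrow> real" where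
  "qnorm_sq Q x = x \<bullet> (Q *v x)"

definition mat_geq :: "(nat \<Rightarrow> ('d::finite) set) \<Rightarrow> nat \<Rightarrow> real^'d^'d \<Rightarrow> real^'d^'d" where
  "mat_geq S j Q = (\<chi> a b. if a \<in> (\<Union>k\<in>{1..<j}. S k) \<or> b \<in> (\<Union>k\<in>{1..<j}. S k) then 0 else Q $ a $ b)"

definition Q_tilde :: "nat \<Rightarrow> (nat \<Rightarrow> ('d::finite) set) \<Rightarrow> (nat \<Rightarrow> real^'d^'d) \<Rightarrow> real^'d^'d" where
  "Q_tilde m S Q = (\<Sum>j\<in>{1..m}. mat_geq S j (Q j) + mat_geq S (j+1) (Q j))"

definition mat_opnorm :: "real^'d^'d \<Rightarrow> real" where
  "mat_opnorm A = onorm (\<lambda>x. A *v x)"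

end

theory Submission
  imports Defs
begin


lemma sym_form:
  fixes Q :: "real^'d^'d"
  assumes "transpose Q = Q"
  shows "a \<bullet> (Q *v b) = b \<bullet> (Q *v a)"
proof -
  have "a \<bullet> (Q *v b) = (\<Sum>i\<in>UNIV. \<Sum>j\<in>UNIV. a$i * Q$i$j * b$j)"
    by (simp add: inner_vec_def matrix_vector_mult_def sum_distrib_left mult.assoc)
  also have "\<dots> = (\<Sum>j\<in>UNIV. \<Sum>i\<in>UNIV. a$i * Q$i$j * b$j)" by (rule sum.swap)
  also have "\<dots> = (\<Sum>j\<in>UNIV. \<Sum>i\<in>UNIV. b$j * Q$j$i * a$i)"
  proof -
    have "Q$i$j = Q$j$i" for i j using assms
      by (metis transpose_def vec_lambda_beta)
    then show ?thesis by (simp add: ac_simps)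
  qed
  also have "\<dots> = b \<bullet> (Q *v a)"
    by (simp add: inner_vec_def matrix_vector_mult_def sum_distrib_left mult.assoc)
  finally show ?thesis .
qed

lemma quad_convex:
  fixes Q :: "real^'d^'d"
  assumes "psd Q" "0 \<le> s" "s \<le> 1"
  shows "qnorm_sq Q (s *\<^sub>R a + (1-s) *\<^sub>R b) \<le> s * qnorm_sq Q a + (1-s) * qnorm_sq Q b"
proof -
  have T: "transpose Q = Q" and P: "0 \<le> (a-b) \<bullet> (Q *v (a-b))" using assms(1) by (auto simp: psd_def)
  have S: "a \<bullet> (Q *v b) = b \<bullet> (Q *v a)" by (rule sym_form[OF T])
  have e1: "(a-b) \<bullet> (Q *v (a-b)) = a \<bullet> (Q *v a) - 2 * (a \<bullet> (Q *v b)) + b \<bullet> (Q *v b)"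
    using S by (simp add: matrix_vector_mult_diff_distrib inner_diff_left inner_diff_right)
  have e2: "(s *\<^sub>R a + (1-s) *\<^sub>R b) \<bullet> (Q *v (s *\<^sub>R a + (1-s) *\<^sub>R b))
     = s * s * (a \<bullet> (Q *v a)) + 2 * s * (1-s) * (a \<bullet> (Q *v b)) + (1-s) * (1-s) * (b \<bullet> (Q *v b))"
    using S by (simp add: matrix_vector_right_distrib matrix_vector_mult_scaleR inner_add_left inner_add_right algebra_simps)
  have "s * (1-s) * ((a-b) \<bullet> (Q *v (a-b))) \<ge> 0" using assms P by simp
  then show ?thesis unfolding qnorm_sq_def e2 using e1 by (simp add: algebra_simps)
qed



definition rst :: "('d::finite) set \<Rightarrow> real^'d \<Rightarrow> real^'d" where
  "rst A z = (\<chi> i. if i \<in> A then z $ i else 0)"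

definition Tb :: "(nat \<Rightarrow> ('d::finite) set) \<Rightarrow> nat \<Rightarrow> 'd set" where
  "Tb S k = (\<Union>i\<in>{1..<k}. S i)"

lemma qnorm_mat_geq: "qnorm_sq (mat_geq S k Q) z = qnorm_sq Q (rst (- Tb S k) z)"
  unfolding qnorm_sq_def mat_geq_def rst_def Tb_def
  by (auto simp: inner_vec_def matrix_vector_mult_def sum_distrib_left intro!: sum.cong)

lemma qnorm_add: "qnorm_sq (A + B) z = qnorm_sq A z + qnorm_sq B z"
  unfolding qnorm_sq_def by (simp add: matrix_vector_mult_add_rdistrib inner_add_right)

lemma qnorm_sum: "qnorm_sq (\<Sum>j\<in>I. A j) z = (\<Sum>j\<in>I. qnorm_sq (A j) z)"
proof (induction I rule: infinite_finite_induct)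
  case (infinite A) then show ?case by (simp add: qnorm_sq_def)
next
  case empty then show ?case by (simp add: qnorm_sq_def)
next
  case (insert x F) then show ?case by (simp add: qnorm_add)
qed

lemma telescope: "(\<Sum>k\<in>{1..m}. (a k - a (Suc k)) :: real) = a 1 - a (Suc m)"
  by (induction m) (auto simp: atLeastAtMostSuc_conv)

lemma rst_split:
  assumes "A \<inter> B = {}"
  shows "rst (A \<union> B) z = rst A z + rst B z"
  using assms unfolding rst_def by (auto simp: vec_eq_iff)

lemma rst_orth:
  assumes "A \<inter> B = {}"
  shows "rst A z \<bullet> rst B w = 0"
  using assms unfolding rst_def by (auto simp: inner_vec_def intro!: sum.neutral)

lemma rst_inner: "rst A u \<bullet> rst A z = u \<bullet> rst A z"
  unfolding rst_def by (auto simp: inner_vec_def intro!: sum.cong)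

lemma rst_UNIV[simp]: "rst UNIV z = z" unfolding rst_def by (simp add: vec_eq_iff)
lemma rst_empty[simp]: "rst {} z = 0" unfolding rst_def by (simp add: vec_eq_iff)
lemma rst_diff: "rst A (u - v) = rst A u - rst A v" unfolding rst_def by (simp add: vec_eq_iff)
lemma rst_add: "rst A (u + v) = rst A u + rst A v" unfolding rst_def by (simp add: vec_eq_iff)
lemma rst_scale: "rst A (c *\<^sub>R u) = c *\<^sub>R rst A u" unfolding rst_def by (simp add: vec_eq_iff)
lemma rst_zero[simp]: "rst A 0 = 0" unfolding rst_def by (simp add: vec_eq_iff)
lemma rst_sum: "rst A (\<Sum>t\<in>I. u t) = (\<Sum>t\<in>I. rst A (u t))"
  by (induction I rule: infinite_finite_induct) (auto simp: rst_add)
lemma block_part_rst: "block_part S j = rst (S j)"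
  unfolding block_part_def rst_def by auto

context
  fixes m and S :: "nat \<Rightarrow> ('d::{finite,linorder}) set"
  assumes bp: "block_partition m S"
begin

lemma Tb1: "Tb S 1 = {}" unfolding Tb_def by auto
lemma TbM: "Tb S (Suc m) = UNIV"
proof -
  have "{1..<Suc m} = {1..m}" by auto
  then show ?thesis using bp unfolding Tb_def block_partition_def by simp
qed
lemma TbSuc: "1 \<le> k \<Longrightarrow> Tb S (Suc k) = Tb S k \<union> S k"
  unfolding Tb_def by (auto simp: less_Suc_eq)
lemma disj: "k \<in> {1..m} \<Longrightarrow> S k \<inter> Tb S k = {}"
  using bp unfolding Tb_def block_partition_def
  by (auto) (meson atLeastAtMost_iff le_trans less_imp_le_nat less_irrefl)

lemma compl_split: "k \<in> {1..m} \<Longrightarrow> - Tb S k = S k \<union> - Tb S (Suc k)"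
  "k \<in> {1..m} \<Longrightarrow> S k \<inter> - Tb S (Suc k) = {}"
  using TbSuc[of k] disj[of k] by auto

lemma rst_step: "k \<in> {1..m} \<Longrightarrow> rst (- Tb S k) z = rst (S k) z + rst (- Tb S (Suc k)) z"
  using compl_split rst_split by metis

lemma norm_blocks: "(\<Sum>k\<in>{1..m}. (norm (rst (S k) z))\<^sup>2) = (norm z)\<^sup>2"
proof -
  have "(norm (rst (S k) z))\<^sup>2 = (norm (rst (- Tb S k) z))\<^sup>2 - (norm (rst (- Tb S (Suc k)) z))\<^sup>2"
    if "k \<in> {1..m}" for k
    using rst_step[OF that, of z] rst_orth[OF compl_split(2)[OF that], of z z]
    by (simp add: power2_norm_eq_inner inner_add_left inner_add_right inner_commute)
  then have "(\<Sum>k\<in>{1..m}. (norm (rst (S k) z))\<^sup>2) =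
     (\<Sum>k\<in>{1..m}. (norm (rst (- Tb S k) z))\<^sup>2 - (norm (rst (- Tb S (Suc k)) z))\<^sup>2)"
    by (rule sum.cong[OF refl])
  also have "\<dots> = (norm z)\<^sup>2" by (subst telescope) (simp add: TbM Tb1[unfolded One_nat_def])
  finally show ?thesis .
qed

end


lemma line_deriv:
  assumes "\<And>w. GDERIV f w :> g w"
  shows "((\<lambda>s. f (u + s *\<^sub>R v)) has_real_derivative (g (u + s *\<^sub>R v) \<bullet> v)) (at s)"
proof -
  have d1: "((\<lambda>s. u + s *\<^sub>R v) has_derivative (\<lambda>h. h *\<^sub>R v)) (at s)"
    by (auto intro!: derivative_eq_intros)
  have d2: "(f has_derivative (\<lambda>h. h \<bullet> g (u + s *\<^sub>R v))) (at (u + s *\<^sub>R v))"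
    using assms[of "u + s *\<^sub>R v"] by (simp add: gderiv_def)
  have "((\<lambda>s. f (u + s *\<^sub>R v)) has_derivative (\<lambda>h. (h *\<^sub>R v) \<bullet> g (u + s *\<^sub>R v))) (at s)"
    using diff_chain_at[OF d1 d2] by (simp add: o_def)
  moreover have "(\<lambda>h. (h *\<^sub>R v) \<bullet> g (u + s *\<^sub>R v)) = (*) (g (u + s *\<^sub>R v) \<bullet> v)"
    by (auto simp: inner_commute)
  ultimately show ?thesis by (simp add: has_field_derivative_def)
qed

lemma seg_bound_eps:
  fixes h h' :: "real \<Rightarrow> real"
  assumes d: "\<And>s. (h has_real_derivative h' s) (at s)"
    and b: "\<And>s. 0 \<le> s \<Longrightarrow> s \<le> 1 \<Longrightarrow> h' s - G \<le> N * sqrt (s * A + (1 - s) * B)"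
    and A: "0 \<le> A" and B: "0 \<le> B" and N: "0 \<le> N" and e: "0 < e"
  shows "h 1 - h 0 - G \<le> N / 2 * ((A + B) / 2 / e + e)"
proof -
  define c1 where "c1 = N / 2 * (B / e + e)"
  define c2 where "c2 = N / 2 * ((A - B) / (2 * e))"
  define P where "P s = h s - s * G - c1 * s - c2 * s ^ 2" for s
  have dP0: "(P has_real_derivative (h' s - G - c1 - c2 * (2 * s))) (at s)" for s
  proof -
    have d3: "((\<lambda>s. s) has_real_derivative 1) (at s)" by (rule DERIV_ident)
    have d2: "((\<lambda>s. s ^ 2) has_real_derivative 2 * s) (at s)" using DERIV_pow[of 2 s] by simp
    have "((\<lambda>s. h s - s * G - c1 * s - c2 * s ^ 2) has_real_derivative (h' s - 1 * G - c1 * 1 - c2 * (2 * s))) (at s)"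
      by (rule DERIV_diff[OF DERIV_diff[OF DERIV_diff[OF d DERIV_cmult_right[OF d3]] DERIV_cmult[OF d3]] DERIV_cmult[OF d2]])
    then show ?thesis unfolding P_def by simp
  qed
  have eq: "h' s - G - c1 - c2 * (2 * s) = h' s - G - N / 2 * ((B + s * (A - B)) / e + e)" for s
  proof -
    have h1: "c2 * (2 * s) = N / 2 * (s * (A - B) / e)" unfolding c2_def using e by simp
    have "c1 + c2 * (2 * s) = N / 2 * (B / e + s * (A - B) / e + e)"
      unfolding h1 c1_def by (simp add: distrib_left)
    also have "B / e + s * (A - B) / e = (B + s * (A - B)) / e" by (simp add: add_divide_distrib)
    finally have "c1 + c2 * (2 * s) = N / 2 * ((B + s * (A - B)) / e + e)" .
    then show ?thesis by linarith
  qed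
  have dP: "(P has_real_derivative (h' s - G - N / 2 * ((B + s * (A - B)) / e + e))) (at s)" for s
    using dP0[of s] eq[of s] by simp
  have "sqrt w \<le> (w / e + e) / 2" if "0 \<le> w" for w
  proof -
    have "0 \<le> (sqrt w - e)\<^sup>2" by simp
    then have "2 * e * sqrt w \<le> w + e\<^sup>2" using that by (simp add: power2_diff real_sqrt_pow2 mult.commute mult.left_commute)
    then show ?thesis using e by (simp add: field_simps power2_eq_square)
  qed
  have neg: "h' s - G - N / 2 * ((B + s * (A - B)) / e + e) \<le> 0" if "0 \<le> s" "s \<le> 1" for s
  proof -
    have w0: "0 \<le> s * A + (1 - s) * B" using that A B by simp
    have "h' s - G \<le> N * sqrt (s * A + (1 - s) * B)" using b that by simp
    also have "\<dots> \<le> N * (((s * A + (1 - s) * B) / e + e) / 2)"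
      using mult_left_mono[OF \<open>\<And>w. 0 \<le> w \<Longrightarrow> _\<close>[OF w0] N] by simp
    also have "\<dots> = N / 2 * ((B + s * (A - B)) / e + e)"
    proof -
      have "s * A + (1 - s) * B = B + s * (A - B)" by (simp add: algebra_simps)
      then show ?thesis by simp
    qed
    finally show ?thesis by simp
  qed
  have "P 1 \<le> P 0"
  proof (rule DERIV_nonpos_imp_nonincreasing[of 0 1 P])
    fix x :: real assume "0 \<le> x" "x \<le> 1"
    then show "\<exists>y. (P has_real_derivative y) (at x) \<and> y \<le> 0"
      using dP[of x] neg[of x] by (intro exI conjI)
  qed simp
  then have "h 1 - G - c1 - c2 \<le> h 0" unfolding P_def by simp
  moreover have "c1 + c2 = N / 2 * ((A + B) / 2 / e + e)"
  proof -
    have "(A + B) / 2 = B + (A - B) / 2" by (simp add: field_simps)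
    then have "(A + B) / 2 / e = B / e + (A - B) / (2 * e)" by (simp add: add_divide_distrib)
    then show ?thesis unfolding c1_def c2_def by (simp add: distrib_left)
  qed
  ultimately show ?thesis by linarith
qed

lemma seg_bound:
  fixes h h' :: "real \<Rightarrow> real"
  assumes d: "\<And>s. (h has_real_derivative h' s) (at s)"
    and b: "\<And>s. 0 \<le> s \<Longrightarrow> s \<le> 1 \<Longrightarrow> h' s - G \<le> N * sqrt (s * A + (1 - s) * B)"
    and A: "0 \<le> A" and B: "0 \<le> B" and N: "0 \<le> N"
  shows "h 1 - h 0 - G \<le> N * sqrt ((A + B) / 2)"
proof (cases "(A + B) / 2 = 0")
  case False
  then have c: "0 < sqrt ((A + B) / 2)" using A B by simp
  have "h 1 - h 0 - G \<le> N / 2 * ((A + B) / 2 / sqrt ((A + B) / 2) + sqrt ((A + B) / 2))"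
    by (rule seg_bound_eps[OF d b A B N c])
  also have "(A + B) / 2 / sqrt ((A + B) / 2) = sqrt ((A + B) / 2)"
    using A B by (intro real_div_sqrt) simp
  finally show ?thesis by simp
next
  case True
  have "h 1 - h 0 - G \<le> 0"
  proof (rule ccontr)
    assume "\<not> ?thesis"
    then have D: "0 < h 1 - h 0 - G" by simp
    define e where "e = (h 1 - h 0 - G) / (N + 1)"
    have e: "0 < e" using D N by (simp add: e_def)
    have "h 1 - h 0 - G \<le> N / 2 * ((A + B) / 2 / e + e)"
      by (rule seg_bound_eps[OF d b A B N e])
    also have "\<dots> = N / 2 * e" using True by simp
    also have "\<dots> < h 1 - h 0 - G"
    proof -
      have "(N + 1) * e = h 1 - h 0 - G" using N unfolding e_def by simp
      moreover have "N / 2 * e \<le> N * e" using N e by simp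
      moreover have "N * e < (N + 1) * e" using e by simp
      ultimately show ?thesis by linarith
    qed
    finally show False by simp
  qed
  then show ?thesis using True by simp
qed



lemma tangent:
  fixes F :: "real^'d \<Rightarrow> real"
  assumes cv: "convex_on UNIV F" and gr: "\<And>w. GDERIV F w :> G w"
  shows "G x \<bullet> (y - x) \<le> F y - F x"
proof -
  define v where "v = y - x"
  define \<phi> where "\<phi> s = F (x + s *\<^sub>R v)" for s
  have "convex_on UNIV \<phi>"
  proof (rule convex_onI)
    fix t a b :: real assume "0 < t" "t < 1"
    have eq: "x + ((1 - t) *\<^sub>R a + t *\<^sub>R b) *\<^sub>R v = (1 - t) *\<^sub>R (x + a *\<^sub>R v) + t *\<^sub>R (x + b *\<^sub>R v)"
      by (simp add: algebra_simps)
    show "\<phi> ((1 - t) *\<^sub>R a + t *\<^sub>R b) \<le> (1 - t) * \<phi> a + t * \<phi> b"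
      unfolding \<phi>_def eq using convex_onD[OF cv, of t] \<open>0 < t\<close> \<open>t < 1\<close> by simp
  qed simp
  moreover have "(\<phi> has_real_derivative (G (x + 0 *\<^sub>R v) \<bullet> v)) (at 0)"
    unfolding \<phi>_def by (rule line_deriv[OF gr])
  ultimately have "\<phi> 1 - \<phi> 0 \<ge> (G (x + 0 *\<^sub>R v) \<bullet> v) * (1 - 0)"
    by (intro convex_on_imp_above_tangent[of UNIV]) auto
  then show ?thesis unfolding \<phi>_def v_def by simp
qed

lemma grad_avg:
  fixes ft :: "nat \<Rightarrow> real^'d \<Rightarrow> real"
  assumes grad_t: "\<And>t. t \<in> I \<Longrightarrow> GDERIV (ft t) x :> gt t x"
    and f_def: "\<And>x. f x = c * (\<Sum>t\<in>I. ft t x)"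
    and grad_f: "GDERIV f x :> gx"
  shows "gx = c *\<^sub>R (\<Sum>t\<in>I. gt t x)"
proof -
  have f: "f = (\<lambda>x. c * (\<Sum>t\<in>I. ft t x))" using f_def by auto
  have "((\<lambda>x. \<Sum>t\<in>I. ft t x) has_derivative (\<lambda>h. \<Sum>t\<in>I. h \<bullet> gt t x)) (at x)"
    using grad_t by (intro has_derivative_sum) (simp add: gderiv_def)
  then have "(f has_derivative (\<lambda>h. c * (\<Sum>t\<in>I. h \<bullet> gt t x))) (at x)"
    unfolding f by (rule has_derivative_mult_right)
  moreover have "(\<lambda>h. c * (\<Sum>t\<in>I. h \<bullet> gt t x)) = (\<lambda>h. h \<bullet> (c *\<^sub>R (\<Sum>t\<in>I. gt t x)))"
    by (simp add: inner_sum_right)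
  ultimately have d1: "(f has_derivative (\<lambda>h. h \<bullet> (c *\<^sub>R (\<Sum>t\<in>I. gt t x)))) (at x)" by simp
  have d2: "(f has_derivative (\<lambda>h. h \<bullet> gx)) (at x)" using grad_f by (simp add: gderiv_def)
  have "(\<lambda>h. h \<bullet> gx) = (\<lambda>h. h \<bullet> (c *\<^sub>R (\<Sum>t\<in>I. gt t x)))"
    by (rule has_derivative_unique[OF d2 d1])
  then have "(gx - c *\<^sub>R (\<Sum>t\<in>I. gt t x)) \<bullet> gx = (gx - c *\<^sub>R (\<Sum>t\<in>I. gt t x)) \<bullet> (c *\<^sub>R (\<Sum>t\<in>I. gt t x))"
    by metis
  then have "(gx - c *\<^sub>R (\<Sum>t\<in>I. gt t x)) \<bullet> (gx - c *\<^sub>R (\<Sum>t\<in>I. gt t x)) = 0"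
    by (simp add: inner_diff_right)
  then show ?thesis by simp
qed

lemma avg_bound:
  fixes a :: "nat \<Rightarrow> real^'d"
  assumes n: "n \<ge> 1" and b: "\<And>t. t \<in> {1..n} \<Longrightarrow> (norm (a t))\<^sup>2 \<le> q"
  shows "(norm ((1 / real n) *\<^sub>R (\<Sum>t\<in>{1..n}. a t)))\<^sup>2 \<le> q"
proof -
  have "norm ((1 / real n) *\<^sub>R (\<Sum>t\<in>{1..n}. a t)) \<le> (1 / real n) * (\<Sum>t\<in>{1..n}. norm (a t))"
    using norm_sum[of a "{1..n}"] n by (simp add: divide_right_mono)
  then have "(norm ((1 / real n) *\<^sub>R (\<Sum>t\<in>{1..n}. a t)))\<^sup>2 \<le> ((1 / real n) * (\<Sum>t\<in>{1..n}. norm (a t)))\<^sup>2"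
    by (simp add: power_mono)
  also have "\<dots> = (\<Sum>t\<in>{1..n}. norm (a t))\<^sup>2 / (real n)\<^sup>2" by (simp add: power_divide)
  also have "\<dots> \<le> ((\<Sum>t\<in>{1..n}. (norm (a t))\<^sup>2) * real n) / (real n)\<^sup>2"
    using sum_squared_le_sum_of_squares[of "\<lambda>t. norm (a t)" "{1..n}"] by (simp add: divide_right_mono)
  also have "\<dots> \<le> ((\<Sum>t\<in>{1..n}. q) * real n) / (real n)\<^sup>2"
    using b n by (intro divide_right_mono mult_right_mono sum_mono) auto
  also have "\<dots> = q" using n by (simp add: power2_eq_square)
  finally show ?thesis .
qed



lemma descent:
  fixes f :: "real^'d::{finite,linorder} \<Rightarrow> real" and S :: "nat \<Rightarrow> 'd set"
  assumes bp: "block_partition m S"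
    and gr: "\<And>w. GDERIV f w :> g w"
    and Qp: "\<And>j. j \<in> {1..m} \<Longrightarrow> psd (Q j)"
    and Qb: "\<And>j x y. j \<in> {1..m} \<Longrightarrow> (norm (rst (S j) (g x - g y)))\<^sup>2 \<le> qnorm_sq (Q j) (x - y)"
  shows "f y - f x - g x \<bullet> (y - x) \<le> sqrt (qnorm_sq (Q_tilde m S Q) (y - x) / 2) * norm (y - x)"
proof -
  define z where "z = y - x"
  define Fk where "Fk k = f (x + rst (- Tb S k) z)" for k
  define Gk where "Gk k = g x \<bullet> rst (- Tb S k) z" for k
  define Ak where "Ak k = qnorm_sq (Q k) (rst (- Tb S k) z)" for k
  define Bk where "Bk k = qnorm_sq (Q k) (rst (- Tb S (Suc k)) z)" for k
  define Nk where "Nk k = norm (rst (S k) z)" for k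
  have psd0: "0 \<le> qnorm_sq (Q k) w" if "k \<in> {1..m}" for k w
    using Qp[OF that] by (simp add: psd_def qnorm_sq_def)
  have step: "Fk k - Fk (Suc k) - (Gk k - Gk (Suc k)) \<le> Nk k * sqrt ((Ak k + Bk k) / 2)"
    if k: "k \<in> {1..m}" for k
  proof -
    define a where "a = rst (- Tb S k) z"
    define b where "b = rst (- Tb S (Suc k)) z"
    define v where "v = rst (S k) z"
    define u where "u = x + b"
    have avb: "a = v + b" unfolding a_def v_def b_def by (rule rst_step[OF bp k])
    have G: "Gk k - Gk (Suc k) = g x \<bullet> v"
      unfolding Gk_def avb[unfolded a_def] by (simp add: inner_add_right b_def)
    have h1: "f (u + 1 *\<^sub>R v) = Fk k" unfolding Fk_def u_def avb[unfolded a_def]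
      by (simp add: add_ac)
    have h0: "f (u + 0 *\<^sub>R v) = Fk (Suc k)" unfolding Fk_def u_def b_def by simp
    have bnd: "g (u + s *\<^sub>R v) \<bullet> v - g x \<bullet> v \<le> Nk k * sqrt (s * Ak k + (1 - s) * Bk k)"
      if s: "0 \<le> s" "s \<le> 1" for s
    proof -
      define w where "w = u + s *\<^sub>R v"
      have wx: "w - x = s *\<^sub>R a + (1 - s) *\<^sub>R b"
        unfolding w_def u_def avb by (simp add: algebra_simps)
      have "g w \<bullet> v - g x \<bullet> v = rst (S k) (g w - g x) \<bullet> v"
        unfolding v_def rst_inner by (simp add: inner_diff_left)
      also have "\<dots> \<le> norm (rst (S k) (g w - g x)) * Nk k"
        unfolding Nk_def v_def by (rule norm_cauchy_schwarz)
      also have "\<dots> \<le> sqrt (s * Ak k + (1 - s) * Bk k) * Nk k"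
      proof (rule mult_right_mono)
        have "(norm (rst (S k) (g w - g x)))\<^sup>2 \<le> qnorm_sq (Q k) (w - x)" by (rule Qb[OF k])
        also have "\<dots> \<le> s * Ak k + (1 - s) * Bk k"
          unfolding wx Ak_def Bk_def a_def[symmetric] b_def[symmetric]
          by (rule quad_convex[OF Qp[OF k] s])
        finally show "norm (rst (S k) (g w - g x)) \<le> sqrt (s * Ak k + (1 - s) * Bk k)"
          by (rule real_le_rsqrt)
      qed (simp add: Nk_def)
      finally show ?thesis unfolding w_def by (simp add: mult.commute)
    qed
    have "f (u + 1 *\<^sub>R v) - f (u + 0 *\<^sub>R v) - g x \<bullet> v \<le> Nk k * sqrt ((Ak k + Bk k) / 2)"
      by (rule seg_bound[where h = "\<lambda>s. f (u + s *\<^sub>R v)" and h' = "\<lambda>s. g (u + s *\<^sub>R v) \<bullet> v"])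
        (use line_deriv[OF gr] bnd psd0[OF k] in \<open>auto simp: Ak_def Bk_def Nk_def\<close>)
    then show ?thesis unfolding h1 h0 G .
  qed
  have F1: "Fk 1 = f y" unfolding Fk_def z_def by (simp add: Tb1[OF bp, unfolded One_nat_def])
  have FM: "Fk (Suc m) = f x" unfolding Fk_def by (simp add: TbM[OF bp])
  have G1: "Gk 1 = g x \<bullet> z" unfolding Gk_def by (simp add: Tb1[OF bp, unfolded One_nat_def])
  have GM: "Gk (Suc m) = 0" unfolding Gk_def by (simp add: TbM[OF bp])
  have "f y - f x - g x \<bullet> (y - x) = (\<Sum>k\<in>{1..m}. Fk k - Fk (Suc k)) - (\<Sum>k\<in>{1..m}. Gk k - Gk (Suc k))"
    unfolding telescope F1 FM G1 GM z_def by simp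
  also have "\<dots> = (\<Sum>k\<in>{1..m}. Fk k - Fk (Suc k) - (Gk k - Gk (Suc k)))"
    by (simp add: sum_subtractf)
  also have "\<dots> \<le> (\<Sum>k\<in>{1..m}. Nk k * sqrt ((Ak k + Bk k) / 2))"
    by (rule sum_mono) (rule step)
  also have "\<dots> \<le> sqrt (qnorm_sq (Q_tilde m S Q) z / 2) * norm z"
  proof -
    have sc: "(\<Sum>k\<in>{1..m}. (sqrt ((Ak k + Bk k) / 2))\<^sup>2) = qnorm_sq (Q_tilde m S Q) z / 2"
    proof -
      have "(\<Sum>k\<in>{1..m}. (sqrt ((Ak k + Bk k) / 2))\<^sup>2) = (\<Sum>k\<in>{1..m}. (Ak k + Bk k) / 2)"
        using psd0 by (intro sum.cong) (auto simp: Ak_def Bk_def)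
      also have "\<dots> = (\<Sum>k\<in>{1..m}. Ak k + Bk k) / 2" by (simp add: sum_divide_distrib)
      also have "(\<Sum>k\<in>{1..m}. Ak k + Bk k) = qnorm_sq (Q_tilde m S Q) z"
        unfolding Q_tilde_def qnorm_sum qnorm_add qnorm_mat_geq Ak_def Bk_def by simp
      finally show ?thesis .
    qed
    have nn: "(\<Sum>k\<in>{1..m}. (Nk k)\<^sup>2) = (norm z)\<^sup>2" unfolding Nk_def by (rule norm_blocks[OF bp])
    have "(\<Sum>k\<in>{1..m}. Nk k * sqrt ((Ak k + Bk k) / 2))\<^sup>2 \<le> (norm z)\<^sup>2 * (qnorm_sq (Q_tilde m S Q) z / 2)"
      using Cauchy_Schwarz_ineq_sum[of Nk "\<lambda>k. sqrt ((Ak k + Bk k) / 2)" "{1..m}"] unfolding sc nn .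
    then have "(\<Sum>k\<in>{1..m}. Nk k * sqrt ((Ak k + Bk k) / 2)) \<le> sqrt ((norm z)\<^sup>2 * (qnorm_sq (Q_tilde m S Q) z / 2))"
      by (rule real_le_rsqrt)
    also have "\<dots> = sqrt (qnorm_sq (Q_tilde m S Q) z / 2) * norm z"
      by (simp only: real_sqrt_mult real_sqrt_abs real_sqrt_pow2 abs_norm_cancel mult.commute)
    finally show ?thesis .
  qed
  finally show ?thesis unfolding z_def .
qed



lemma cocoercive:
  fixes f :: "'a::real_inner \<Rightarrow> real"
  assumes desc: "\<And>x y. f y - f x \<le> g x \<bullet> (y - x) + L / 2 * (norm (y - x))\<^sup>2"
    and tan: "\<And>x y. g x \<bullet> (y - x) \<le> f y - f x"
    and L: "0 \<le> L"
  shows "(norm (g y - g x))\<^sup>2 \<le> 2 * L * (f y - f x - g x \<bullet> (y - x))"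
proof -
  define v where "v = g y - g x"
  define D where "D = f y - f x - g x \<bullet> (y - x)"
  have key: "t * (norm v)\<^sup>2 - L / 2 * t\<^sup>2 * (norm v)\<^sup>2 \<le> D" for t
  proof -
    define w where "w = y - t *\<^sub>R v"
    have 1: "f w - f y \<le> g y \<bullet> (w - y) + L / 2 * (norm (w - y))\<^sup>2" by (rule desc)
    have 2: "g x \<bullet> (w - x) \<le> f w - f x" by (rule tan)
    have e1: "w - y = - (t *\<^sub>R v)" unfolding w_def by simp
    have e2: "w - x = (y - x) - t *\<^sub>R v" unfolding w_def by simp
    have n: "(norm (w - y))\<^sup>2 = t\<^sup>2 * (norm v)\<^sup>2" unfolding e1 by (simp add: power_mult_distrib)
    have "g y \<bullet> (w - y) - g x \<bullet> (w - x) = - t * (v \<bullet> v) - g x \<bullet> (y - x)"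
      unfolding e1 e2 v_def by (simp add: inner_diff_left inner_diff_right algebra_simps)
    then show ?thesis using 1 2 n unfolding D_def by (simp add: power2_norm_eq_inner[symmetric])
  qed
  show ?thesis
  proof (cases "L = 0")
    case False
    then have Lp: "0 < L" using L by simp
    have "(1 / L) * (norm v)\<^sup>2 - L / 2 * (1 / L)\<^sup>2 * (norm v)\<^sup>2 \<le> D" by (rule key)
    moreover have "(1 / L) * (norm v)\<^sup>2 - L / 2 * (1 / L)\<^sup>2 * (norm v)\<^sup>2 = (norm v)\<^sup>2 / (2 * L)"
      using Lp by (simp add: power2_eq_square field_simps)
    ultimately have "(norm v)\<^sup>2 / (2 * L) \<le> D" by simp
    then show ?thesis using Lp unfolding v_def[symmetric] D_def[symmetric] by (simp add: field_simps)
  next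
    case True
    have "(norm v)\<^sup>2 \<le> 0"
    proof (rule ccontr)
      assume "\<not> ?thesis"
      then have p: "0 < (norm v)\<^sup>2" by simp
      have "((\<bar>D\<bar> + 1) / (norm v)\<^sup>2) * (norm v)\<^sup>2 \<le> D" using key[of "(\<bar>D\<bar> + 1) / (norm v)\<^sup>2"] True by simp
      then show False using p by simp
    qed
    then show ?thesis using True unfolding v_def by simp
  qed
qed



theorem lemma4:
  fixes n m :: nat
    and S :: "nat \<Rightarrow> ('d::{finite,linorder}) set"
    and ft :: "nat \<Rightarrow> (real, 'd) vec \<Rightarrow> real"
    and gt :: "nat \<Rightarrow> (real, 'd) vec \<Rightarrow> (real, 'd) vec"
    and f :: "(real, 'd) vec \<Rightarrow> real"
    and g :: "(real, 'd) vec \<Rightarrow> (real, 'd) vec"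
    and Q :: "nat \<Rightarrow> ((real, 'd) vec, 'd) vec"
    and L :: real
  assumes n_pos: "n \<ge> 1"
    and blocks: "block_partition m S"
    and convex: "\<And>t. t \<in> {1..n} \<Longrightarrow> convex_on UNIV (ft t)"
    and grad_t: "\<And>t x. t \<in> {1..n} \<Longrightarrow> GDERIV (ft t) x :> gt t x"
    and cont_t: "\<And>t. t \<in> {1..n} \<Longrightarrow> continuous_on UNIV (gt t)"
    and f_def: "\<And>x. f x = (1 / real n) * (\<Sum>t\<in>{1..n}. ft t x)"
    and grad_f: "\<And>x. GDERIV f x :> g x"
    and Q_psd: "\<And>j. j \<in> {1..m} \<Longrightarrow> psd (Q j)"
    and Q_bound: "\<And>t j x y. t \<in> {1..n} \<Longrightarrow> j \<in> {1..m} \<Longrightarrow>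
        (norm (block_part S j (gt t x - gt t y)))\<^sup>2 \<le> qnorm_sq (Q j) (x - y)"
    and L_def: "L \<ge> 0" "L\<^sup>2 = 2 * mat_opnorm (Q_tilde m S Q)"
  shows "(\<forall>j\<in>{1..m}. \<forall>x y. (norm (block_part S j (g x - g y)))\<^sup>2 \<le> qnorm_sq (Q j) (x - y))
    \<and> (\<forall>x y. f y - f x \<le> g x \<bullet> (y - x) + L / 2 * (norm (y - x))\<^sup>2)
    \<and> (\<forall>x y. (norm (g y - g x))\<^sup>2 \<le> 2 * L * (f y - f x - g x \<bullet> (y - x)))"
proof -
  have gavg: "g x = (1 / real n) *\<^sub>R (\<Sum>t\<in>{1..n}. gt t x)" for x
    by (rule grad_avg[OF grad_t f_def grad_f])
  have P1: "(norm (rst (S j) (g x - g y)))\<^sup>2 \<le> qnorm_sq (Q j) (x - y)" if j: "j \<in> {1..m}" for j x y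
  proof -
    have "rst (S j) (g x - g y) = (1 / real n) *\<^sub>R (\<Sum>t\<in>{1..n}. rst (S j) (gt t x - gt t y))"
      unfolding gavg rst_diff rst_scale rst_sum by (simp add: sum_subtractf scaleR_diff_right)
    then show ?thesis
      using avg_bound[OF n_pos, of "\<lambda>t. rst (S j) (gt t x - gt t y)" "qnorm_sq (Q j) (x - y)"]
        Q_bound[OF _ j, of _ x y] unfolding block_part_rst by simp
  qed
  define opn where "opn = mat_opnorm (Q_tilde m S Q)"
  have opn0: "0 \<le> opn" using L_def unfolding opn_def by (metis zero_le_power2 zero_le_mult_iff zero_less_numeral not_le)
  have Lsq: "L / 2 = sqrt (opn / 2)"
  proof -
    have "sqrt (2 * opn) = sqrt (L\<^sup>2)" using L_def(2) unfolding opn_def by simp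
    also have "\<dots> = L" using L_def(1) by simp
    finally have a: "L = sqrt (2 * opn)" by simp
    have s4: "sqrt 4 = 2" using real_sqrt_abs[of 2] by simp
    have "L / 2 = sqrt (2 * opn) / sqrt 4" using a s4 by simp
    also have "\<dots> = sqrt (2 * opn / 4)" by (simp only: real_sqrt_divide)
    also have "2 * opn / 4 = opn / 2" by simp
    finally show ?thesis .
  qed
  have P2: "f y - f x \<le> g x \<bullet> (y - x) + L / 2 * (norm (y - x))\<^sup>2" for x y
  proof -
    have "f y - f x - g x \<bullet> (y - x) \<le> sqrt (qnorm_sq (Q_tilde m S Q) (y - x) / 2) * norm (y - x)"
      by (rule descent[OF blocks grad_f Q_psd P1])
    also have "\<dots> \<le> sqrt (opn * (norm (y - x))\<^sup>2 / 2) * norm (y - x)"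
    proof (intro mult_right_mono real_sqrt_le_mono divide_right_mono)
      let ?z = "y - x" and ?A = "Q_tilde m S Q"
      have "qnorm_sq ?A ?z \<le> norm ?z * norm (?A *v ?z)"
        unfolding qnorm_sq_def by (rule norm_cauchy_schwarz)
      also have "\<dots> \<le> norm ?z * (opn * norm ?z)"
        unfolding opn_def mat_opnorm_def
        by (intro mult_left_mono onorm) (auto simp: matrix_vector_mul_bounded_linear)
      finally show "qnorm_sq ?A ?z \<le> opn * (norm ?z)\<^sup>2" by (simp add: power2_eq_square ac_simps)
    qed auto
    also have "\<dots> = L / 2 * (norm (y - x))\<^sup>2"
    proof -
      have "opn * (norm (y - x))\<^sup>2 / 2 = opn / 2 * (norm (y - x))\<^sup>2" by simp
      then have "sqrt (opn * (norm (y - x))\<^sup>2 / 2) = sqrt (opn / 2) * norm (y - x)"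
        by (simp only: real_sqrt_mult real_sqrt_abs abs_norm_cancel)
      then show ?thesis unfolding Lsq by (simp add: power2_eq_square)
    qed
    finally show ?thesis by simp
  qed
  have tan: "g x \<bullet> (y - x) \<le> f y - f x" for x y
  proof -
    have "(\<Sum>t\<in>{1..n}. gt t x \<bullet> (y - x)) \<le> (\<Sum>t\<in>{1..n}. ft t y - ft t x)"
      by (rule sum_mono) (rule tangent[OF convex grad_t], auto)
    then have "(1 / real n) * (\<Sum>t\<in>{1..n}. gt t x \<bullet> (y - x)) \<le> (1 / real n) * (\<Sum>t\<in>{1..n}. ft t y - ft t x)"
      by (rule mult_left_mono) simp
    then show ?thesis unfolding f_def gavg
      by (simp add: inner_sum_left sum_subtractf right_diff_distrib)
  qed
  have P3: "(norm (g y - g x))\<^sup>2 \<le> 2 * L * (f y - f x - g x \<bullet> (y - x))" for x y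
    by (rule cocoercive[OF P2 tan L_def(1)])
  show ?thesis using P1 P2 P3 unfolding block_part_rst by blast
qed

end
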